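(* Let $\mathfrak a$ be a finite-dimensional real Euclidean vector space, let $\Delta\subset\mathfrak a^*$ be a reduced root system (i.e. $2\alpha\notin\Delta$ for all $\alpha\in\Delta$) with a chosen set of positive roots $\Delta^+$, and let $m:\Delta\to\mathbb R$, $\alpha\mapsto m_\alpha$, be a Weyl-group-invariant multiplicity function such that $m_\alpha\in 2\mathbb N$ for all $\alpha\in\Delta$. Put $\rho:=\frac12\sum_{\alpha\in\Delta^+}m_\alpha\alpha$ and $\rho_\alpha:=\langle\rho,\alpha\rangle/\langle\alpha,\alpha\rangle$. Then $\rho_\alpha\ge m_\alpha/2$ for every $\alpha\in\Delta^+$.
   Context: $\langle\cdot,\cdot\rangle$ denotes the inner product of $\mathfrak a$ transferred to $\mathfrak a^*$. *)

theory Defs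
  imports "HOL-Analysis.Analysis"
begin

text \<open>We identify the dual space with the Euclidean space itself via the inner product.\<close>

definition root_reflection :: "'a::real_inner \<Rightarrow> 'a \<Rightarrow> 'a" where
  "root_reflection \<alpha> x = x - (2 * (x \<bullet> \<alpha>) / (\<alpha> \<bullet> \<alpha>)) *\<^sub>R \<alpha>"

text \<open>A (crystallographic, possibly non-reduced) root system, not required to span.\<close>
definition root_system :: "'a::euclidean_space set \<Rightarrow> bool" where
  "root_system R \<longleftrightarrow> finite R \<and> 0 \<notin> R \<and>
     (\<forall>\<alpha>\<in>R. root_reflection \<alpha> ` R = R) \<and>
     (\<forall>\<alpha>\<in>R. \<forall>\<beta>\<in>R. 2 * (\<beta> \<bullet> \<alpha>) / (\<alpha> \<bullet> \<alpha>) \<in> \<int>)"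

definition reduced_root_system :: "'a::euclidean_space set \<Rightarrow> bool" where
  "reduced_root_system R \<longleftrightarrow> root_system R \<and> (\<forall>\<alpha>\<in>R. 2 *\<^sub>R \<alpha> \<notin> R)"

definition positive_system :: "'a::euclidean_space set \<Rightarrow> 'a set \<Rightarrow> bool" where
  "positive_system R P \<longleftrightarrow>
     (\<exists>H. (\<forall>\<alpha>\<in>R. \<alpha> \<bullet> H \<noteq> 0) \<and> P = {\<alpha>\<in>R. \<alpha> \<bullet> H > 0})"

inductive_set weyl_group :: "'a::euclidean_space set \<Rightarrow> ('a \<Rightarrow> 'a) set" for R where
  weyl_id: "id \<in> weyl_group R"
| weyl_step: "w \<in> weyl_group R \<Longrightarrow> \<alpha> \<in> R \<Longrightarrow> root_reflection \<alpha> \<circ> w \<in> weyl_group R"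

definition weyl_invariant :: "'a::euclidean_space set \<Rightarrow> ('a \<Rightarrow> real) \<Rightarrow> bool" where
  "weyl_invariant R m \<longleftrightarrow> (\<forall>w\<in>weyl_group R. \<forall>\<alpha>\<in>R. m (w \<alpha>) = m \<alpha>)"

definition rho :: "'a::euclidean_space set \<Rightarrow> ('a \<Rightarrow> real) \<Rightarrow> 'a" where
  "rho P m = (1/2) *\<^sub>R (\<Sum>\<alpha>\<in>P. m \<alpha> *\<^sub>R \<alpha>)"

end

theory Submission
  imports Defs
begin

lemma refl_inner:
  assumes "\<alpha> \<bullet> \<alpha> \<noteq> 0"
  shows "root_reflection \<alpha> x \<bullet> \<alpha> = - (x \<bullet> \<alpha>)"
  using assms by (simp add: root_reflection_def inner_diff_left)

lemma refl_invol:
  assumes "\<alpha> \<bullet> \<alpha> \<noteq> 0"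
  shows "root_reflection \<alpha> (root_reflection \<alpha> x) = x"
proof -
  have "root_reflection \<alpha> (root_reflection \<alpha> x) = root_reflection \<alpha> x + (2 * (x \<bullet> \<alpha>) / (\<alpha> \<bullet> \<alpha>)) *\<^sub>R \<alpha>"
    using refl_inner[OF assms, of x] by (simp add: root_reflection_def)
  then show ?thesis by (simp add: root_reflection_def)
qed

theorem lemma1p1:
  fixes R P :: "'a::euclidean_space set" and m :: "'a \<Rightarrow> real"
  assumes "reduced_root_system R"
    and "positive_system R P"
    and "weyl_invariant R m"
    and "\<forall>\<alpha>\<in>R. \<exists>n::nat. m \<alpha> = 2 * real n"
  shows "\<forall>\<alpha>\<in>P. (rho P m \<bullet> \<alpha>) / (\<alpha> \<bullet> \<alpha>) \<ge> m \<alpha> / 2"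
proof
  fix \<alpha> assume aP: "\<alpha> \<in> P"
  have rs: "root_system R" using assms(1) by (simp add: reduced_root_system_def)
  obtain H where H: "\<forall>\<alpha>\<in>R. \<alpha> \<bullet> H \<noteq> 0" and Pdef: "P = {\<alpha>\<in>R. \<alpha> \<bullet> H > 0}"
    using assms(2) by (auto simp: positive_system_def)
  have PR: "P \<subseteq> R" using Pdef by auto
  have finR: "finite R" and R0: "0 \<notin> R" and Rimg: "\<forall>\<alpha>\<in>R. root_reflection \<alpha> ` R = R"
    using rs by (auto simp: root_system_def)
  have finP: "finite P" using PR finR finite_subset by blast
  have aR: "\<alpha> \<in> R" using aP PR by auto
  have aH: "\<alpha> \<bullet> H > 0" using aP Pdef by auto
  have a0: "\<alpha> \<noteq> 0" using aR R0 by auto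
  have aa: "\<alpha> \<bullet> \<alpha> > 0" using a0 by simp
  hence aa0: "\<alpha> \<bullet> \<alpha> \<noteq> 0" by simp
  define s where "s = root_reflection \<alpha>"
  define f where "f = (\<lambda>\<beta>. m \<beta> * (\<beta> \<bullet> \<alpha>))"
  have mnn: "\<And>\<beta>. \<beta> \<in> R \<Longrightarrow> m \<beta> \<ge> 0" using assms(4) by fastforce
  have sinner: "\<And>x. s x \<bullet> \<alpha> = - (x \<bullet> \<alpha>)" unfolding s_def using refl_inner[OF aa0] by blast
  have sinv: "\<And>x. s (s x) = x" unfolding s_def using refl_invol[OF aa0] by blast
  have sR: "\<And>\<beta>. \<beta> \<in> R \<Longrightarrow> s \<beta> \<in> R" using Rimg aR unfolding s_def by blast
  have "root_reflection \<alpha> \<circ> id \<in> weyl_group R" by (rule weyl_step[OF weyl_id aR])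
  hence ms: "\<And>\<beta>. \<beta> \<in> R \<Longrightarrow> m (s \<beta>) = m \<beta>" using assms(3) unfolding weyl_invariant_def s_def
    by fastforce
  define N where "N = {\<beta>\<in>P. \<beta> \<bullet> \<alpha> < 0}"
  define Q where "Q = {\<beta>\<in>P - {\<alpha>}. \<not> \<beta> \<bullet> \<alpha> < 0}"
  have finN: "finite N" and finQ: "finite Q" using finP by (auto simp: N_def Q_def)
  have "\<not> \<alpha> \<bullet> \<alpha> < 0" using aa by linarith
  hence aN: "\<alpha> \<notin> N" unfolding N_def by blast
  have split1: "P = insert \<alpha> (N \<union> Q)" using aP aN by (auto simp: N_def Q_def)
  have "sum f P = f \<alpha> + sum f (N \<union> Q)"
    using finN finQ aN by (subst split1) (auto simp: Q_def)
  also have "sum f (N \<union> Q) = sum f N + sum f Q"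
    using finN finQ by (intro sum.union_disjoint) (auto simp: N_def Q_def)
  finally have e1: "sum f P = f \<alpha> + sum f N + sum f Q" by simp
  have injs: "inj_on s N" by (metis inj_onI sinv)
  have sN: "s ` N \<subseteq> Q"
  proof
    fix y assume "y \<in> s ` N"
    then obtain \<beta> where b: "\<beta> \<in> N" and y: "y = s \<beta>" by auto
    have bR: "\<beta> \<in> R" and bH: "\<beta> \<bullet> H > 0" and ba: "\<beta> \<bullet> \<alpha> < 0" using b PR Pdef by (auto simp: N_def)
    have "y \<bullet> H = \<beta> \<bullet> H - (2 * (\<beta> \<bullet> \<alpha>) / (\<alpha> \<bullet> \<alpha>)) * (\<alpha> \<bullet> H)"
      by (simp add: y s_def root_reflection_def inner_diff_left)
    moreover have "(2 * (\<beta> \<bullet> \<alpha>) / (\<alpha> \<bullet> \<alpha>)) * (\<alpha> \<bullet> H) < 0"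
      using ba aa aH by (simp add: mult_neg_pos divide_neg_pos)
    ultimately have yH: "y \<bullet> H > 0" using bH by linarith
    have yR: "y \<in> R" using sR bR y by auto
    have ya: "y \<noteq> \<alpha>"
    proof
      assume "y = \<alpha>"
      hence "\<beta> = s \<alpha>" using sinv y by metis
      also have "s \<alpha> = - \<alpha>" using aa0 by (simp add: s_def root_reflection_def scaleR_2)
      finally show False using bH aH by simp
    qed
    show "y \<in> Q" using yH yR ya sinner[of \<beta>] ba y by (auto simp: Q_def Pdef)
  qed
  have "sum f (s ` N) = sum (f \<circ> s) N" by (rule sum.reindex[OF injs])
  also have "\<dots> = - sum f N"
    by (simp add: sum_negf[symmetric] f_def sinner ms N_def) (intro sum.cong; use PR ms in auto)
  finally have e2: "sum f (s ` N) = - sum f N" .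
  have "sum f (s ` N) \<le> sum f Q"
    by (rule sum_mono2[OF finQ sN]) (use PR mnn in \<open>auto simp: Q_def f_def\<close>)
  hence "sum f P \<ge> f \<alpha>" using e1 e2 by linarith
  moreover have "rho P m \<bullet> \<alpha> = (1/2) * sum f P"
    by (simp add: rho_def f_def inner_sum_left)
  ultimately show "(rho P m \<bullet> \<alpha>) / (\<alpha> \<bullet> \<alpha>) \<ge> m \<alpha> / 2"
    using aa by (simp add: f_def field_simps)
qed

end
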